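(* Let $r\ge 2$, $\pi\in\Pi_1(\{1,\dots,r\})$ and $c\in\mathcal{C}(\pi)$, and let $T=\psi_\pi(c)$ be the tree produced by the construction described in the context. Then $T\in\mathcal{E}(\pi)$ and $\kappa(T)=\omega(c,\pi)$.
   Context: Trees: an unordered increasing tree is a rooted tree on distinct positive integers, sons unordered, each son larger than its father. $\sigma_i(T)$ is the number of sons of $i$; $\kappa(T)=\prod_{i\in V(T)}x_i^{\sigma_i(T)}$ (with $x_i$ formal variables). $\Pi_1(\{1,\dots,r\})$ is the set of set partitions of $\{1,\dots,r\}$ having $\{1\}$ as a block; for such $\pi$ with $k$ blocks, index them $\pi_1,\dots,\pi_k$ so that $\mu_i=\max\pi_i$ satisfy $1=\mu_1<\mu_2<\dots<\mu_k=r$. $\mathcal{E}(\pi)$ is the set of unordered increasing trees on $\{1,\dots,r\}$ in which, for every two elements $i<j$ of the same block of $\pi$, $i$ is an ancestor of $j$. $\mathcal{C}(\pi)=\{(c_2,\dots,c_{k-1}):1\le c_i\le \mu_i\}$ (only the empty list if $k=2$), and $\omega(c,\pi)=\frac{x_{c_2}\cdots x_{c_{k-1}}}{x_{\mu_2}\cdots x_{\mu_k}}\prod_{i=1}^r x_i$. $v$-decomposition: for a vertex $v$ of an unordered increasing tree $T$ with chain $a_1<\dots<a_k=v$ from the root to $v$, removing the chain edges gives components $T^{(a_i)}$ rooted at $a_i$. Splice: for unordered increasing trees $T_1,T_2$ with disjoint vertex-sets and $v_1\in V(T_1)$, $v_2\in V(T_2)$, $v_1>v_2$, $\mathrm{spl}(T_1,v_1;T_2,v_2)$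 is the tree on $V(T_1)\cup V(T_2)$ obtained by merging the root-to-$v_1$ chain of $T_1$ and the root-to-$v_2$ chain of $T_2$ into one increasing chain (root = smallest element, ending at $v_1$) and attaching at each chain vertex its component from the $v_1$-decomposition of $T_1$ or the $v_2$-decomposition of $T_2$. Construction of $\psi_\pi(c)$: Stage 1: let $\tau_\ell$ be the increasing chain on the elements of $\pi_\ell$ ($\ell=1,\dots,k$), and set $\nu=1$. For $i=2,\dots,k-1$ (Stage $i$): if $c_i$ is a vertex of $\tau_1$ or $\tau_i$, replace $\tau_1$ by $\mathrm{spl}(\tau_i,\mu_i;\tau_1,\nu)$, discard $\tau_i$, and set $\nu=c_i$; otherwise $c_i$ is a vertex of $\tau_j$ for some $j>i$, and then replace $\tau_j$ by $\mathrm{spl}(\tau_i,\mu_i;\tau_j,c_i)$ and discard $\tau_i$. Finally (Stage $k$), $\psi_\pi(c)=\mathrm{spl}(\tau_k,\mu_k;\tau_1,\nu)$. (All splices are well defined.) *)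

theory Defs
  imports Main "HOL-Library.Disjoint_Sets"
begin

text \<open>An (unordered increasing) tree is represented by its vertex set together with
  a parent function; the parent of the root (and of non-vertices) is irrelevant.\<close>
type_synonym tree = "nat set \<times> (nat \<Rightarrow> nat)"

definition verts :: "tree \<Rightarrow> nat set" where "verts T = fst T"
definition par :: "tree \<Rightarrow> nat \<Rightarrow> nat" where "par T = snd T"

definition is_inc_tree :: "tree \<Rightarrow> bool" where
  "is_inc_tree T \<longleftrightarrow> finite (verts T) \<and> verts T \<noteq> {} \<and> 0 \<notin> verts T \<and>
     (\<forall>u\<in>verts T. u \<noteq> Min (verts T) \<longrightarrow> par T u \<in> verts T \<and> par T u < u)"

definition anc :: "tree \<Rightarrow> nat \<Rightarrow> nat set" where
  "anc T v = {u \<in> verts T. \<exists>n\<ge>1. (par T ^^ n) v = u}"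

definition rpath :: "tree \<Rightarrow> nat \<Rightarrow> nat set" where
  "rpath T v = insert v (anc T v)"

definition pred_in :: "nat set \<Rightarrow> nat \<Rightarrow> nat" where
  "pred_in C u = (if \<exists>w\<in>C. w < u then Max {w\<in>C. w < u} else 0)"

definition chain_tree :: "nat set \<Rightarrow> tree" where
  "chain_tree S = (S, \<lambda>u. if u \<in> S then pred_in S u else 0)"

definition sons :: "tree \<Rightarrow> nat \<Rightarrow> nat" where
  "sons T i = card {j \<in> verts T. j \<noteq> Min (verts T) \<and> par T j = i}"

definition kappa :: "(nat \<Rightarrow> 'a::field) \<Rightarrow> tree \<Rightarrow> 'a" where
  "kappa x T = (\<Prod>i\<in>verts T. x i ^ sons T i)"

text \<open>Splice: the root-to-v1 chain of T1 and the root-to-v2 chain of T2 are merged into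
  one increasing chain; every other vertex keeps its parent (its component of the
  v-decomposition stays attached at the same chain vertex).\<close>
definition spl :: "tree \<Rightarrow> nat \<Rightarrow> tree \<Rightarrow> nat \<Rightarrow> tree" where
  "spl T1 v1 T2 v2 =
    (let C = rpath T1 v1 \<union> rpath T2 v2 in
      (verts T1 \<union> verts T2,
       \<lambda>u. if u \<in> C then pred_in C u
           else if u \<in> verts T1 then par T1 u
           else if u \<in> verts T2 then par T2 u else 0))"

definition Pi1 :: "nat \<Rightarrow> nat set set set" where
  "Pi1 r = {\<pi>. partition_on {1..r} \<pi> \<and> {1} \<in> \<pi>}"

text \<open>mu i = max of the i-th block (1-based), blocks ordered by their maxima.\<close>
definition mu :: "nat set set \<Rightarrow> nat \<Rightarrow> nat" where
  "mu \<pi> i = sorted_list_of_set (Max ` \<pi>) ! (i - 1)"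

definition blk :: "nat set set \<Rightarrow> nat \<Rightarrow> nat set" where
  "blk \<pi> i = (THE B. B \<in> \<pi> \<and> Max B = mu \<pi> i)"

text \<open>C(pi): sequences (c_2,...,c_{k-1}) with 1 <= c_i <= mu_i, k = number of blocks.
  Only the values of c on {2..k-1} are relevant.\<close>
definition Cset :: "nat set set \<Rightarrow> (nat \<Rightarrow> nat) set" where
  "Cset \<pi> = {c. \<forall>i\<in>{2..<card \<pi>}. 1 \<le> c i \<and> c i \<le> mu \<pi> i}"

definition omega :: "(nat \<Rightarrow> 'a::field) \<Rightarrow> nat \<Rightarrow> nat set set \<Rightarrow> (nat \<Rightarrow> nat) \<Rightarrow> 'a" where
  "omega x r \<pi> c =
     (\<Prod>i\<in>{2..<card \<pi>}. x (c i)) / (\<Prod>i\<in>{2..card \<pi>}. x (mu \<pi> i)) * (\<Prod>i\<in>{1..r}. x i)"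

definition inE :: "nat \<Rightarrow> nat set set \<Rightarrow> tree \<Rightarrow> bool" where
  "inE r \<pi> T \<longleftrightarrow> is_inc_tree T \<and> verts T = {1..r} \<and>
     (\<forall>B\<in>\<pi>. \<forall>i\<in>B. \<forall>j\<in>B. i < j \<longrightarrow> i \<in> anc T j)"

text \<open>The construction psi_pi(c). State: the family tau_1..tau_k and nu.\<close>
definition psi_init :: "nat set set \<Rightarrow> (nat \<Rightarrow> tree) \<times> nat" where
  "psi_init \<pi> = (\<lambda>l. chain_tree (blk \<pi> l), 1)"

definition psi_stage :: "nat set set \<Rightarrow> (nat \<Rightarrow> nat) \<Rightarrow> nat \<Rightarrow> (nat \<Rightarrow> tree) \<times> nat
    \<Rightarrow> (nat \<Rightarrow> tree) \<times> nat" where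
  "psi_stage \<pi> c i st =
    (let \<tau> = fst st; \<nu> = snd st in
     if c i \<in> verts (\<tau> 1) \<or> c i \<in> verts (\<tau> i)
     then (\<tau>(1 := spl (\<tau> i) (mu \<pi> i) (\<tau> 1) \<nu>), c i)
     else (let j = (THE j. i < j \<and> j \<le> card \<pi> \<and> c i \<in> verts (\<tau> j)) in
           (\<tau>(j := spl (\<tau> i) (mu \<pi> i) (\<tau> j) (c i)), \<nu>)))"

definition psi :: "nat set set \<Rightarrow> (nat \<Rightarrow> nat) \<Rightarrow> tree" where
  "psi \<pi> c =
    (let st = fold (psi_stage \<pi> c) [2..<card \<pi>] (psi_init \<pi>) in
       spl (fst st (card \<pi>)) (mu \<pi> (card \<pi>)) (fst st 1) (snd st))"

end

theory Submission
  imports Defs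
begin


definition wft :: "tree \<Rightarrow> bool" where
  "wft T \<longleftrightarrow> is_inc_tree T \<and> par T (Min (verts T)) = 0 \<and> (\<forall>u. u \<notin> verts T \<longrightarrow> par T u = 0)"

definition W :: "(nat \<Rightarrow> 'a::comm_monoid_mult) \<Rightarrow> tree \<Rightarrow> 'a" where
  "W x T = (\<Prod>j\<in>verts T - {Min (verts T)}. x (par T j))"

lemma wft_D:
  assumes "wft T"
  shows "finite (verts T)" "verts T \<noteq> {}" "0 \<notin> verts T" "par T (Min (verts T)) = 0"
    "\<And>u. u \<notin> verts T \<Longrightarrow> par T u = 0"
    "\<And>u. u \<in> verts T \<Longrightarrow> u \<noteq> Min (verts T) \<Longrightarrow> par T u \<in> verts T"
    "\<And>u. u \<in> verts T \<Longrightarrow> u \<noteq> Min (verts T) \<Longrightarrow> par T u < u"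
  using assms unfolding wft_def is_inc_tree_def by auto

lemma funpow_zero_fix:
  fixes f :: "nat \<Rightarrow> nat" assumes "f 0 = 0" shows "(f ^^ n) 0 = 0"
proof (induction n)
  case 0 show ?case by simp
next
  case (Suc n) then show ?case using assms by simp
qed

lemma anc_root:
  assumes "wft T" shows "anc T (Min (verts T)) = {}"
proof -
  have "\<And>n. n \<ge> 1 \<Longrightarrow> (par T ^^ n) (Min (verts T)) = 0"
  proof -
    fix n :: nat assume "n \<ge> 1"
    then obtain m where n: "n = Suc m" by (cases n) auto
    have "par T 0 = 0" using wft_D[OF assms] by auto
    then show "(par T ^^ n) (Min (verts T)) = 0"
      unfolding n funpow_Suc_right o_def using wft_D(4)[OF assms] funpow_zero_fix by metis
  qed
  note z = this
  show ?thesis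
  proof (rule equals0I)
    fix u assume "u \<in> anc T (Min (verts T))"
    then obtain n where n: "n \<ge> 1" "(par T ^^ n) (Min (verts T)) = u" "u \<in> verts T"
      unfolding anc_def by blast
    then have "u = 0" using z by simp
    then show False using n(3) wft_D(3)[OF assms] by simp
  qed
qed

lemma anc_rec:
  assumes "wft T" "v \<in> verts T" "v \<noteq> Min (verts T)"
  shows "anc T v = insert (par T v) (anc T (par T v))"
proof -
  have pv: "par T v \<in> verts T" using wft_D(6)[OF assms(1)] assms by auto
  show ?thesis
  proof (intro set_eqI iffI)
    fix u assume "u \<in> anc T v"
    then obtain n where n: "n \<ge> 1" "(par T ^^ n) v = u" "u \<in> verts T" unfolding anc_def by auto
    then obtain m where "n = Suc m" by (cases n) auto
    then have "(par T ^^ m) (par T v) = u" using n by (metis comp_apply funpow_Suc_right)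
    then show "u \<in> insert (par T v) (anc T (par T v))"
      using n(3) unfolding anc_def
      by (cases m) auto
  next
    fix u assume "u \<in> insert (par T v) (anc T (par T v))"
    then show "u \<in> anc T v"
    proof
      assume "u = par T v" then show ?thesis unfolding anc_def using pv
        by (auto intro!: exI[of _ 1])
    next
      assume "u \<in> anc T (par T v)"
      then obtain n where n: "n \<ge> 1" "(par T ^^ n) (par T v) = u" "u \<in> verts T" unfolding anc_def by auto
      then have "(par T ^^ Suc n) v = u" using n by (metis comp_apply funpow_Suc_right)
      then show ?thesis unfolding anc_def using n by (auto intro!: exI[of _ "Suc n"])
    qed
  qed
qed

lemma anc_sub: "anc T v \<subseteq> verts T" unfolding anc_def by auto

lemma anc_less:
  assumes "wft T" shows "v \<in> verts T \<Longrightarrow> u \<in> anc T v \<Longrightarrow> u < v"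
proof (induction v arbitrary: u rule: less_induct)
  case (less v)
  show ?case
  proof (cases "v = Min (verts T)")
    case True then show ?thesis using less anc_root[OF assms] by auto
  next
    case False
    have u: "u = par T v \<or> u \<in> anc T (par T v)" using anc_rec[OF assms less(2) False] less(3) by auto
    have p: "par T v < v" "par T v \<in> verts T" using wft_D[OF assms] less(2) False by auto
    show ?thesis
    proof (cases "u = par T v")
      case True then show ?thesis using p by simp
    next
      case False
      then have "u < par T v" using less(1)[OF p(1) p(2)] u by blast
      then show ?thesis using p by simp
    qed
  qed
qed

lemma anc_trans:
  assumes "u \<in> anc T v" shows "anc T u \<subseteq> anc T v"
proof
  fix w assume "w \<in> anc T u"
  then obtain n where n: "n \<ge> 1" "(par T ^^ n) u = w" "w \<in> verts T" unfolding anc_def by auto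
  obtain m where m: "m \<ge> 1" "(par T ^^ m) v = u" using assms unfolding anc_def by auto
  have "(par T ^^ (n + m)) v = w" using n m funpow_add[of n m "par T"] by auto
  then show "w \<in> anc T v" unfolding anc_def using n m by (auto intro!: exI[of _ "n+m"])
qed

lemma rpath_iff:
  "u \<in> rpath T v \<longleftrightarrow> u = v \<or> u \<in> anc T v" unfolding rpath_def by auto

lemma iter_le:
  assumes "wft T" "w \<in> verts T" "(par T ^^ n) w \<in> verts T"
  shows "(par T ^^ n) w \<le> w"
proof (cases n)
  case 0 then show ?thesis by simp
next
  case (Suc m)
  then have "(par T ^^ n) w \<in> anc T w" unfolding anc_def using assms by auto
  then show ?thesis using anc_less[OF assms(1,2)] by fastforce
qed

lemma rpath_below:
  assumes "wft T" "v \<in> verts T" "u \<in> rpath T v"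
  shows "{w \<in> rpath T v. w < u} = anc T u"
proof (intro set_eqI iffI)
  fix w assume wu: "w \<in> anc T u"
  have uV: "u \<in> verts T" using assms(2,3) anc_sub[of T v] unfolding rpath_iff by auto
  have "w < u" using anc_less[OF assms(1) uV wu] .
  then show "w \<in> {w \<in> rpath T v. w < u}" using wu
    using assms anc_trans[of u T v] anc_less[OF assms(1)] anc_sub
    unfolding rpath_iff by (auto)
next
  fix w assume w: "w \<in> {w \<in> rpath T v. w < u}"
  have uV: "u \<in> verts T" using assms(2,3) anc_sub[of T v] unfolding rpath_iff by auto
  have wV: "w \<in> verts T" using w assms(2) anc_sub[of T v] unfolding rpath_iff by auto
  have ex: "\<exists>a. (par T ^^ a) v = z" if "z \<in> rpath T v" for z
  proof (cases "z = v")
    case True then show ?thesis by (intro exI[of _ 0]) simp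
  next
    case False then have "z \<in> anc T v" using that unfolding rpath_iff by simp
    then show ?thesis unfolding anc_def by blast
  qed
  obtain a where a: "(par T ^^ a) v = w" using ex w by blast
  obtain b where b: "(par T ^^ b) v = u" using ex assms(3) by blast
  show "w \<in> anc T u"
  proof (cases "a \<le> b")
    case True
    then have "(par T ^^ (b - a)) w = u" using a b funpow_add[of "b-a" a "par T"] by auto
    then have "u \<le> w" using iter_le[OF assms(1) wV] uV by auto
    then show ?thesis using w by auto
  next
    case False
    then have "(par T ^^ (a - b)) u = w" using a b funpow_add[of "a-b" b "par T"] by auto
    then show ?thesis unfolding anc_def using False wV by (auto intro!: exI[of _ "a-b"])
  qed
qed

lemma rpath_sub: "v \<in> verts T \<Longrightarrow> rpath T v \<subseteq> verts T"
  unfolding rpath_def using anc_sub by auto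

lemma rpath_le: "wft T \<Longrightarrow> v \<in> verts T \<Longrightarrow> u \<in> rpath T v \<Longrightarrow> u \<le> v"
  by (metis anc_less less_imp_le order_refl rpath_iff)

lemma root_in_rpath:
  assumes "wft T" shows "v \<in> verts T \<Longrightarrow> Min (verts T) \<in> rpath T v"
proof (induction v rule: less_induct)
  case (less v)
  show ?case
  proof (cases "v = Min (verts T)")
    case True then show ?thesis unfolding rpath_def by auto
  next
    case False
    have pv: "par T v < v" "par T v \<in> verts T" using wft_D[OF assms] less(2) False by auto
    then have "Min (verts T) \<in> rpath T (par T v)" using less by auto
    then show ?thesis using anc_rec[OF assms less(2) False] unfolding rpath_def by auto
  qed
qed

lemma pred_in_props:
  assumes "finite C" "w \<in> C" "w < u"
  shows "pred_in C u \<in> C" "pred_in C u < u" "\<And>w'. w' \<in> C \<Longrightarrow> w' < u \<Longrightarrow> w' \<le> pred_in C u"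
proof -
  have ne: "{w\<in>C. w < u} \<noteq> {}" "finite {w\<in>C. w < u}" using assms by auto
  have eq: "pred_in C u = Max {w\<in>C. w < u}" unfolding pred_in_def using assms by auto
  show "pred_in C u \<in> C" "pred_in C u < u" using Max_in[OF ne(2,1)] eq by auto
  show "\<And>w'. w' \<in> C \<Longrightarrow> w' < u \<Longrightarrow> w' \<le> pred_in C u" using eq ne by auto
qed

lemma pred_in_none: "\<not> (\<exists>w\<in>C. w < u) \<Longrightarrow> pred_in C u = 0"
  unfolding pred_in_def by auto

lemma par_rpath:
  assumes "wft T" "v \<in> verts T" "u \<in> rpath T v" "u \<noteq> Min (verts T)"
  shows "par T u = pred_in (rpath T v) u"
proof -
  have uV: "u \<in> verts T" using assms(3) rpath_sub[OF assms(2)] by auto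
  have S: "{w \<in> rpath T v. w < u} = insert (par T u) (anc T (par T u))"
    using rpath_below[OF assms(1-3)] anc_rec[OF assms(1) uV assms(4)] by simp
  have fin: "finite (rpath T v)" using rpath_sub[OF assms(2)] wft_D(1)[OF assms(1)] finite_subset by auto
  have pu: "par T u \<in> verts T" using wft_D[OF assms(1)] uV assms(4) by auto
  have ne: "\<exists>w\<in>rpath T v. w < u" using S by auto
  have "pred_in (rpath T v) u = Max {w \<in> rpath T v. w < u}" unfolding pred_in_def using ne by simp
  also have "\<dots> = Max (insert (par T u) (anc T (par T u)))" using S by simp
  also have "\<dots> = par T u"
  proof (rule Max_eqI)
    show "finite (insert (par T u) (anc T (par T u)))"
      using finite_subset[OF anc_sub[of T "par T u"] wft_D(1)[OF assms(1)]] by simp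
    show "\<And>y. y \<in> insert (par T u) (anc T (par T u)) \<Longrightarrow> y \<le> par T u"
      using anc_less[OF assms(1) pu] by fastforce
  qed simp
  finally show ?thesis by simp
qed

lemma chain_anc:
  assumes "finite C" "C \<subseteq> verts T" "\<And>b. b \<in> C \<Longrightarrow> (\<exists>w\<in>C. w < b) \<Longrightarrow> par T b = pred_in C b"
  shows "b \<in> C \<Longrightarrow> a \<in> C \<Longrightarrow> a < b \<Longrightarrow> a \<in> anc T b"
proof (induction b rule: less_induct)
  case (less b)
  define p where "p = pred_in C b"
  have p: "p \<in> C" "p < b" "a \<le> p" using pred_in_props[OF assms(1) less(3,4)] less unfolding p_def by auto
  have pb: "par T b = p" using assms(3)[OF less(2)] less unfolding p_def by auto
  have pa: "p \<in> anc T b" unfolding anc_def using pb p assms(2) by (auto intro!: exI[of _ 1])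
  show ?case
  proof (cases "a = p")
    case True then show ?thesis using pa by simp
  next
    case False
    then have "a \<in> anc T p" using less(1)[OF p(2) p(1) less(3)] p by auto
    then show ?thesis using anc_trans[OF pa] by auto
  qed
qed




lemma pred_in_prod:
  fixes f :: "nat \<Rightarrow> 'a::comm_monoid_mult"
  shows "finite S \<Longrightarrow> S \<noteq> {} \<Longrightarrow> (\<Prod>j\<in>S - {Min S}. f (pred_in S j)) = (\<Prod>j\<in>S - {Max S}. f j)"
proof (induction "card S" arbitrary: S rule: less_induct)
  case less
  define m where "m = Max S"
  define S' where "S' = S - {m}"
  have mS: "m \<in> S" using less m_def by simp
  have S: "S = insert m S'" "m \<notin> S'" using mS S'_def by auto
  have lt: "\<And>j. j \<in> S' \<Longrightarrow> j < m" using less(2) S'_def m_def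
    by (metis Diff_iff Max_ge insertI1 le_neq_implies_less)
  show ?case
  proof (cases "S' = {}")
    case True
    then have "S = {m}" using S by simp
    then show ?thesis by simp
  next
    case False
    have finS': "finite S'" using less(2) S'_def by simp
    have cardS': "card S' < card S" using S finS' by simp
    have IH: "(\<Prod>j\<in>S' - {Min S'}. f (pred_in S' j)) = (\<Prod>j\<in>S' - {Max S'}. f j)"
      using less(1)[OF cardS' finS' False] .
    have MinS: "Min S = Min S'"
    proof -
      have "Min S' \<in> S'" using finS' False by simp
      then have lt2: "Min S' < m" using lt by simp
      have "Min S = min m (Min S')" using S finS' False by simp
      then show ?thesis using lt2 by simp
    qed
    have pr_eq: "pred_in S j = pred_in S' j" if "j \<in> S'" for j
    proof -
      have "{w \<in> S. w < j} = {w \<in> S'. w < j}" using S lt[OF that] by auto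
      then show ?thesis unfolding pred_in_def
        by (metis (no_types, lifting) mem_Collect_eq)
    qed
    have pm: "pred_in S m = Max S'"
    proof -
      have "{w \<in> S. w < m} = S'" using S lt by auto
      then show ?thesis unfolding pred_in_def using False
        by (metis (no_types, lifting) ex_in_conv mem_Collect_eq)
    qed
    have minne: "Min S' \<noteq> m" using lt finS' False by (metis Min_in less_irrefl)
    have "S - {Min S} = insert m (S' - {Min S'})" using S MinS minne by auto
    then have "(\<Prod>j\<in>S - {Min S}. f (pred_in S j)) = f (pred_in S m) * (\<Prod>j\<in>S' - {Min S'}. f (pred_in S j))"
      using finS' S(2) by simp
    also have "\<dots> = f (Max S') * (\<Prod>j\<in>S' - {Min S'}. f (pred_in S' j))"
      using pm pr_eq by (metis (no_types, lifting) Diff_iff prod.cong)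
    also have "\<dots> = f (Max S') * (\<Prod>j\<in>S' - {Max S'}. f j)" using IH by simp
    also have "\<dots> = (\<Prod>j\<in>S'. f j)"
      using finS' False by (metis Max_in prod.remove)
    also have "\<dots> = (\<Prod>j\<in>S - {Max S}. f j)" using S'_def m_def by simp
    finally show ?thesis .
  qed
qed

lemma kappa_W:
  assumes "is_inc_tree T"
  shows "kappa x T = W x T"
proof -
  let ?V = "verts T" and ?m = "Min (verts T)"
  have fin: "finite ?V" using assms unfolding is_inc_tree_def by simp
  have img: "par T ` (?V - {?m}) \<subseteq> ?V" using assms unfolding is_inc_tree_def by auto
  have "W x T = (\<Prod>i\<in>?V. \<Prod>j\<in>{j. j \<in> ?V - {?m} \<and> par T j = i}. x (par T j))"
    unfolding W_def using prod.group[OF _ fin img, of "\<lambda>j. x (par T j)"] fin by simp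
  also have "\<dots> = (\<Prod>i\<in>?V. \<Prod>j\<in>{j. j \<in> ?V - {?m} \<and> par T j = i}. x i)"
    by (rule prod.cong) auto
  also have "\<dots> = (\<Prod>i\<in>?V. x i ^ sons T i)"
  proof (rule prod.cong)
    fix i assume "i \<in> ?V"
    have "{j. j \<in> ?V - {?m} \<and> par T j = i} = {j \<in> ?V. j \<noteq> ?m \<and> par T j = i}" by auto
    then show "(\<Prod>j\<in>{j. j \<in> ?V - {?m} \<and> par T j = i}. x i) = x i ^ sons T i"
      unfolding sons_def by simp
  qed simp
  finally show ?thesis unfolding kappa_def by simp
qed

lemma chain_tree_verts: "verts (chain_tree S) = S" unfolding chain_tree_def verts_def by simp
lemma chain_tree_par: "par (chain_tree S) u = (if u \<in> S then pred_in S u else 0)"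
  unfolding chain_tree_def par_def by simp

lemma chain_tree_wft:
  assumes "finite S" "S \<noteq> {}" "0 \<notin> S"
  shows "wft (chain_tree S)"
  unfolding wft_def is_inc_tree_def chain_tree_verts chain_tree_par
proof (intro conjI ballI impI allI)
  show "finite S" "S \<noteq> {}" "0 \<notin> S" using assms by auto
  fix u assume u: "u \<in> S" "u \<noteq> Min S"
  have "Min S \<in> S" "Min S < u" using assms u by (auto intro: le_neq_implies_less)
  then show "(if u \<in> S then pred_in S u else 0) \<in> S" "(if u \<in> S then pred_in S u else 0) < u"
    using pred_in_props[OF assms(1)] u by auto
next
  show "(if Min S \<in> S then pred_in S (Min S) else 0) = 0"
    using assms by (auto intro!: pred_in_none dest: Min_le[OF assms(1)])
qed simp

lemma chain_tree_anc:
  assumes "finite S" "a \<in> S" "b \<in> S" "a < b"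
  shows "a \<in> anc (chain_tree S) b"
  by (rule chain_anc[OF assms(1)]) (use assms in \<open>auto simp: chain_tree_verts chain_tree_par\<close>)

lemma chain_tree_W:
  assumes "finite S" "S \<noteq> {}" "0 \<notin> S"
  shows "W x (chain_tree S) = (\<Prod>j\<in>S - {Max S}. x j)"
proof -
  have "W x (chain_tree S) = (\<Prod>j\<in>S - {Min S}. x (pred_in S j))"
    unfolding W_def chain_tree_verts chain_tree_par by (rule prod.cong) auto
  then show ?thesis using pred_in_prod[OF assms(1,2)] by simp
qed




lemma spl_verts: "verts (spl T1 v1 T2 v2) = verts T1 \<union> verts T2"
  by (simp add: spl_def Let_def verts_def)

lemma spl_par: "par (spl T1 v1 T2 v2) u =
   (if u \<in> rpath T1 v1 \<union> rpath T2 v2 then pred_in (rpath T1 v1 \<union> rpath T2 v2) u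
    else if u \<in> verts T1 then par T1 u else if u \<in> verts T2 then par T2 u else 0)"
  by (simp add: spl_def Let_def par_def)

lemma rpath_fin: "wft T \<Longrightarrow> v \<in> verts T \<Longrightarrow> finite (rpath T v)"
  using rpath_sub wft_D(1) finite_subset by blast

lemma rpath_self: "v \<in> rpath T v" unfolding rpath_def by simp

lemma rpath_Min: "wft T \<Longrightarrow> v \<in> verts T \<Longrightarrow> Min (rpath T v) = Min (verts T)"
proof -
  assume a: "wft T" "v \<in> verts T"
  have "Min (verts T) \<in> rpath T v" using root_in_rpath[OF a] .
  moreover have "\<And>w. w \<in> rpath T v \<Longrightarrow> Min (verts T) \<le> w"
    using rpath_sub[OF a(2)] wft_D(1)[OF a(1)] by auto
  ultimately show ?thesis using rpath_fin[OF a] by (intro Min_eqI) auto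
qed

lemma rpath_Max: "wft T \<Longrightarrow> v \<in> verts T \<Longrightarrow> Max (rpath T v) = v"
  using rpath_fin rpath_le rpath_self by (intro Max_eqI) auto

lemma W_split:
  assumes "wft T" "v \<in> verts T"
  shows "W x T = (\<Prod>j\<in>verts T - rpath T v. x (par T j)) * (\<Prod>j\<in>rpath T v - {v}. x j)"
proof -
  let ?V = "verts T" and ?R = "rpath T v"
  have fin: "finite ?V" using wft_D(1)[OF assms(1)] .
  have RV: "?R \<subseteq> ?V" using rpath_sub[OF assms(2)] .
  have mR: "Min ?V \<in> ?R" using root_in_rpath[OF assms] .
  have split: "?V - {Min ?V} = (?V - ?R) \<union> (?R - {Min ?V})" using RV mR by auto
  have "W x T = (\<Prod>j\<in>?V - ?R. x (par T j)) * (\<Prod>j\<in>?R - {Min ?V}. x (par T j))"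
    unfolding W_def split
    by (rule prod.union_disjoint) (use fin RV finite_subset in auto)
  also have "(\<Prod>j\<in>?R - {Min ?V}. x (par T j)) = (\<Prod>j\<in>?R - {Min ?R}. x (pred_in ?R j))"
    using par_rpath[OF assms] rpath_Min[OF assms] by (intro prod.cong) auto
  also have "\<dots> = (\<Prod>j\<in>?R - {Max ?R}. x j)"
    using pred_in_prod[OF rpath_fin[OF assms]] rpath_self[of v T] by blast
  finally show ?thesis using rpath_Max[OF assms] by simp
qed

lemma anc_pres:
  assumes wi: "wft Ti" and "wft T" and sub: "verts Ti \<subseteq> verts T" and finC: "finite C"
    and CV: "C \<subseteq> verts T"
    and chain: "\<And>b. b \<in> C \<Longrightarrow> \<exists>w\<in>C. w < b \<Longrightarrow> par T b = pred_in C b"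
    and same: "\<And>u. u \<in> verts Ti \<Longrightarrow> u \<notin> C \<Longrightarrow> par T u = par Ti u"
    and mC: "Min (verts T) \<in> C"
    and inR: "\<And>u. u \<in> verts Ti \<Longrightarrow> u \<in> C \<Longrightarrow> u \<in> rpath Ti vi"
    and vi: "vi \<in> verts Ti" and RC: "rpath Ti vi \<subseteq> C"
  shows "u \<in> verts Ti \<Longrightarrow> anc Ti u \<subseteq> anc T u"
proof (induction u rule: less_induct)
  case (less u)
  show ?case
  proof (cases "u = Min (verts Ti)")
    case True then show ?thesis using anc_root[OF wi] by simp
  next
    case False
    define p where "p = par Ti u"
    have p: "p \<in> verts Ti" "p < u" using wft_D(6,7)[OF wi less(2) False] p_def by auto
    have rec: "anc Ti u = insert p (anc Ti p)" using anc_rec[OF wi less(2) False] p_def by simp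
    have IH: "anc Ti p \<subseteq> anc T p" using less(1)[OF p(2,1)] .
    have pu: "p \<in> anc T u"
    proof (cases "u \<in> C")
      case True
      have uR: "u \<in> rpath Ti vi" using inR[OF less(2) True] .
      have "anc Ti u \<subseteq> rpath Ti vi"
      proof (cases "u = vi")
        case True then show ?thesis unfolding rpath_def by auto
      next
        case False then have "u \<in> anc Ti vi" using uR unfolding rpath_iff by simp
        then show ?thesis using anc_trans[of u Ti vi] unfolding rpath_def by blast
      qed
      then have "p \<in> C" using rec RC by blast
      then show ?thesis using chain_anc[OF finC CV chain True _ p(2)] by blast
    next
      case False
      have "par T u = p" using same[OF less(2) False] p_def by simp
      moreover have "p \<in> verts T" using p sub by blast
      ultimately show ?thesis unfolding anc_def by (auto intro!: exI[of _ 1])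
    qed
    have "anc Ti p \<subseteq> anc T u" using IH anc_trans[OF pu] by (rule subset_trans)
    then show ?thesis unfolding rec using pu by simp
  qed
qed

locale splice =
  fixes T1 T2 :: tree and v1 v2 :: nat
  assumes w1: "wft T1" and w2: "wft T2" and disj: "verts T1 \<inter> verts T2 = {}"
    and v1: "v1 \<in> verts T1" and v2: "v2 \<in> verts T2" and lt: "v2 < v1"
begin

abbreviation "C1 \<equiv> rpath T1 v1"
abbreviation "C2 \<equiv> rpath T2 v2"
abbreviation "CC \<equiv> C1 \<union> C2"
abbreviation "TT \<equiv> spl T1 v1 T2 v2"

lemma C1V: "C1 \<subseteq> verts T1" using rpath_sub[OF v1] .
lemma C2V: "C2 \<subseteq> verts T2" using rpath_sub[OF v2] .
lemma finCC: "finite CC" using rpath_fin[OF w1 v1] rpath_fin[OF w2 v2] by simp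
lemma TV: "verts TT = verts T1 \<union> verts T2" by (rule spl_verts)
lemma CCV: "CC \<subseteq> verts TT" using C1V C2V TV by auto
lemma finV: "finite (verts TT)" using TV wft_D(1)[OF w1] wft_D(1)[OF w2] by simp
lemma neV: "verts T1 \<noteq> {}" "verts T2 \<noteq> {}" using wft_D(2) w1 w2 by auto

lemma mV: "Min (verts TT) \<in> CC"
proof -
  have "Min (verts TT) = min (Min (verts T1)) (Min (verts T2))"
    unfolding TV using Min_Un[OF wft_D(1)[OF w1] wft_D(2)[OF w1] wft_D(1)[OF w2] wft_D(2)[OF w2]] .
  then show ?thesis using root_in_rpath[OF w1 v1] root_in_rpath[OF w2 v2] by (auto simp: min_def)
qed

lemma mle: "u \<in> verts TT \<Longrightarrow> Min (verts TT) \<le> u" using finV by simp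

lemma Cle: "w \<in> CC \<Longrightarrow> w \<le> v1"
  using rpath_le[OF w1 v1, of w] rpath_le[OF w2 v2, of w] lt by auto

lemma wftT: "wft TT"
proof -
  have key: "par TT u \<in> verts TT \<and> par TT u < u" if u: "u \<in> verts TT" "u \<noteq> Min (verts TT)" for u
  proof -
    have mu: "Min (verts TT) < u" using mle[OF u(1)] u(2) by simp
    show ?thesis
    proof (cases "u \<in> CC")
      case True
      then have "par TT u = pred_in CC u" using spl_par by simp
      then show ?thesis using pred_in_props[OF finCC mV mu] CCV by auto
    next
      case False
      show ?thesis
      proof (cases "u \<in> verts T1")
        case True
        have "u \<noteq> Min (verts T1)" using False root_in_rpath[OF w1 v1] by auto
        moreover have "par TT u = par T1 u" using spl_par[of T1 v1 T2 v2 u] False True by simp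
        ultimately show ?thesis using wft_D(6,7)[OF w1 True] TV by auto
      next
        case F2: False
        then have T2: "u \<in> verts T2" using u TV by auto
        have "u \<noteq> Min (verts T2)" using False root_in_rpath[OF w2 v2] by auto
        moreover have "par TT u = par T2 u" using spl_par[of T1 v1 T2 v2 u] False F2 T2 by simp
        ultimately show ?thesis using wft_D(6,7)[OF w2 T2] TV by auto
      qed
    qed
  qed
  have root: "par TT (Min (verts TT)) = 0"
  proof -
    have "\<not> (\<exists>w\<in>CC. w < Min (verts TT))" using CCV mle by fastforce
    then show ?thesis using spl_par mV pred_in_none by simp
  qed
  have out: "par TT u = 0" if u: "u \<notin> verts TT" for u
  proof -
    have "u \<notin> verts T1" "u \<notin> verts T2" "u \<notin> CC" using u TV CCV by auto
    then show "par TT u = 0" using spl_par[of T1 v1 T2 v2 u] by simp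
  qed
  have "verts TT \<noteq> {}" using TV neV by auto
  moreover have "0 \<notin> verts TT" using TV wft_D(3)[OF w1] wft_D(3)[OF w2] by auto
  ultimately show ?thesis unfolding wft_def is_inc_tree_def using key root out finV by blast
qed

lemma chainC: "b \<in> CC \<Longrightarrow> \<exists>w\<in>CC. w < b \<Longrightarrow> par TT b = pred_in CC b"
  using spl_par by simp

lemma anc1: "u \<in> verts T1 \<Longrightarrow> anc T1 u \<subseteq> anc TT u"
  by (rule anc_pres[OF w1 wftT _ finCC CCV chainC _ mV _ v1])
     (use TV C2V disj spl_par in auto)

lemma anc2: "u \<in> verts T2 \<Longrightarrow> anc T2 u \<subseteq> anc TT u"
  by (rule anc_pres[OF w2 wftT _ finCC CCV chainC _ mV _ v2])
     (use TV C1V disj spl_par in auto)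

lemma WT: "W x TT = W x T1 * W x T2 * x v2"
proof -
  let ?V = "verts TT" and ?m = "Min (verts TT)"
  have split: "?V - {?m} = (?V - CC) \<union> (CC - {?m})" using CCV mV by auto
  have "W x TT = (\<Prod>j\<in>?V - CC. x (par TT j)) * (\<Prod>j\<in>CC - {?m}. x (par TT j))"
    unfolding W_def split
    by (rule prod.union_disjoint) (use finV CCV finite_subset in auto)
  also have "(\<Prod>j\<in>?V - CC. x (par TT j)) =
     (\<Prod>j\<in>verts T1 - C1. x (par T1 j)) * (\<Prod>j\<in>verts T2 - C2. x (par T2 j))"
  proof -
    have e: "?V - CC = (verts T1 - C1) \<union> (verts T2 - C2)" using TV C1V C2V disj by auto
    have "(\<Prod>j\<in>?V - CC. x (par TT j)) =
       (\<Prod>j\<in>verts T1 - C1. x (par TT j)) * (\<Prod>j\<in>verts T2 - C2. x (par TT j))"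
      unfolding e by (rule prod.union_disjoint) (use wft_D(1)[OF w1] wft_D(1)[OF w2] disj in auto)
    also have "(\<Prod>j\<in>verts T1 - C1. x (par TT j)) = (\<Prod>j\<in>verts T1 - C1. x (par T1 j))"
      by (rule prod.cong) (use spl_par C2V disj in auto)
    also have "(\<Prod>j\<in>verts T2 - C2. x (par TT j)) = (\<Prod>j\<in>verts T2 - C2. x (par T2 j))"
      by (rule prod.cong) (use spl_par C1V disj in auto)
    finally show ?thesis .
  qed
  also have "(\<Prod>j\<in>CC - {?m}. x (par TT j)) = (\<Prod>j\<in>CC - {Min CC}. x (pred_in CC j))"
  proof -
    have "Min CC = ?m" using mV CCV finCC finV by (intro Min_eqI) auto
    moreover have "\<exists>w\<in>CC. w < j" if "j \<in> CC - {?m}" for j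
    proof -
      have jV: "j \<in> ?V" using that CCV by auto
      have "?m < j" using mle[OF jV] that by auto
      then show ?thesis using mV by blast
    qed
    ultimately show ?thesis using chainC by (intro prod.cong) auto
  qed
  also have "\<dots> = (\<Prod>j\<in>CC - {Max CC}. x j)"
    using pred_in_prod[OF finCC] rpath_self[of v1 T1] by blast
  also have "Max CC = v1" using Cle finCC rpath_self[of v1 T1] by (intro Max_eqI) auto
  also have "(\<Prod>j\<in>CC - {v1}. x j) = (\<Prod>j\<in>C1 - {v1}. x j) * (\<Prod>j\<in>C2 - {v2}. x j) * x v2"
  proof -
    have v1C2: "v1 \<notin> C2" using C2V disj v1 by auto
    have e: "CC - {v1} = (C1 - {v1}) \<union> C2" using v1C2 by auto
    have d: "(C1 - {v1}) \<inter> C2 = {}" using C1V C2V disj by auto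
    have "(\<Prod>j\<in>CC - {v1}. x j) = (\<Prod>j\<in>C1 - {v1}. x j) * (\<Prod>j\<in>C2. x j)"
      unfolding e using rpath_fin[OF w1 v1] rpath_fin[OF w2 v2] d by (intro prod.union_disjoint) auto
    also have "(\<Prod>j\<in>C2. x j) = x v2 * (\<Prod>j\<in>C2 - {v2}. x j)"
      using rpath_fin[OF w2 v2] rpath_self[of v2 T2] by (rule prod.remove)
    finally show ?thesis by (simp add: mult_ac)
  qed
  finally have eq: "W x TT = (\<Prod>j\<in>verts T1 - C1. x (par T1 j)) * (\<Prod>j\<in>verts T2 - C2. x (par T2 j)) *
     ((\<Prod>j\<in>C1 - {v1}. x j) * (\<Prod>j\<in>C2 - {v2}. x j) * x v2)" .
  show ?thesis unfolding eq W_split[OF w1 v1, of x] W_split[OF w2 v2, of x] by (simp add: mult_ac)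
qed

end




locale psictx =
  fixes r :: nat and \<pi> :: "nat set set" and c :: "nat \<Rightarrow> nat"
  assumes r2: "r \<ge> 2" and piP: "\<pi> \<in> Pi1 r" and cC: "c \<in> Cset \<pi>"
begin

abbreviation "k \<equiv> card \<pi>"
abbreviation "M \<equiv> Max ` \<pi>"
abbreviation "sl \<equiv> sorted_list_of_set (Max ` \<pi>)"

lemma part: "partition_on {1..r} \<pi>" and one: "{1} \<in> \<pi>"
  using piP unfolding Pi1_def by auto

lemma Un_pi: "\<Union>\<pi> = {1..r}" using partition_onD1[OF part] by simp

lemma blk_sub: "B \<in> \<pi> \<Longrightarrow> B \<subseteq> {1..r}" using Un_pi by auto
lemma blk_ne: "B \<in> \<pi> \<Longrightarrow> B \<noteq> {}" using partition_onD3[OF part] by auto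
lemma blk_fin: "B \<in> \<pi> \<Longrightarrow> finite B" using blk_sub finite_subset by blast
lemma fin_pi: "finite \<pi>"
  using Un_pi by (metis finite_UnionD finite_atLeastAtMost)
lemma blk_disj: "A \<in> \<pi> \<Longrightarrow> B \<in> \<pi> \<Longrightarrow> A \<noteq> B \<Longrightarrow> A \<inter> B = {}"
  using disjointD[OF partition_onD2[OF part]] by blast

lemma Max_in_blk: "B \<in> \<pi> \<Longrightarrow> Max B \<in> B" using blk_fin blk_ne by simp

lemma inj_Max: "inj_on Max \<pi>"
proof (rule inj_onI)
  fix A B assume "A \<in> \<pi>" "B \<in> \<pi>" "Max A = Max B"
  then show "A = B" using Max_in_blk blk_disj by (metis disjoint_iff)
qed

lemma finM: "finite M" using fin_pi by simp
lemma cardM: "card M = k" using card_image[OF inj_Max] .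
lemma len_sl: "length sl = k" using cardM finM by simp
lemma set_sl: "set sl = M" using finM by simp
lemma sorted_sl: "sorted_wrt (<) sl" by simp

lemma mu_def': "mu \<pi> i = sl ! (i - 1)" unfolding mu_def by simp

lemma mu_mono: "1 \<le> i \<Longrightarrow> i < j \<Longrightarrow> j \<le> k \<Longrightarrow> mu \<pi> i < mu \<pi> j"
  unfolding mu_def' using sorted_wrt_nth_less[OF sorted_sl, of "i-1" "j-1"] len_sl by auto

lemma mu_mono_le: "1 \<le> i \<Longrightarrow> i \<le> j \<Longrightarrow> j \<le> k \<Longrightarrow> mu \<pi> i \<le> mu \<pi> j"
  using mu_mono by (cases "i = j") (auto intro: less_imp_le)

lemma mu_in_M: "1 \<le> i \<Longrightarrow> i \<le> k \<Longrightarrow> mu \<pi> i \<in> M"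
  unfolding mu_def' using len_sl set_sl nth_mem[of "i-1" sl] by auto

lemma M_range: "m \<in> M \<Longrightarrow> m \<in> {1..r}"
proof -
  assume "m \<in> M"
  then obtain B where B: "B \<in> \<pi>" "m = Max B" by auto
  then show ?thesis using Max_in_blk[OF B(1)] blk_sub[OF B(1)] by blast
qed

lemma mu_range: "1 \<le> i \<Longrightarrow> i \<le> k \<Longrightarrow> mu \<pi> i \<in> {1..r}"
  using mu_in_M M_range by blast

lemma M_ex: "m \<in> M \<Longrightarrow> \<exists>i. 1 \<le> i \<and> i \<le> k \<and> mu \<pi> i = m"
proof -
  assume "m \<in> M"
  then obtain t where t: "t < length sl" "sl ! t = m" using set_sl by (metis in_set_conv_nth)
  then show ?thesis unfolding mu_def' using len_sl by (intro exI[of _ "Suc t"]) auto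
qed

lemma k2: "k \<ge> 2"
proof -
  have "r \<in> \<Union>\<pi>" using Un_pi r2 by auto
  then obtain B where B: "B \<in> \<pi>" "r \<in> B" by auto
  have "B \<noteq> {1}" using B r2 by auto
  then have "{{1}, B} \<subseteq> \<pi>" "card {{1}, B} = 2" using B one by auto
  then show ?thesis using card_mono[OF fin_pi, of "{{1}, B}"] by simp
qed

lemma mu1: "mu \<pi> 1 = 1"
proof -
  have "1 \<in> M" using one by force
  then obtain i where i: "1 \<le> i" "i \<le> k" "mu \<pi> i = 1" using M_ex by blast
  have "mu \<pi> 1 \<le> 1" using mu_mono_le[of 1 i] i by auto
  moreover have "mu \<pi> 1 \<ge> 1" using mu_range[of 1] k2 by auto
  ultimately show ?thesis by simp
qed

lemma muk: "mu \<pi> k = r"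
proof -
  have "r \<in> \<Union>\<pi>" using Un_pi r2 by auto
  then obtain B where B: "B \<in> \<pi>" "r \<in> B" by auto
  have "Max B = r" using B blk_sub[OF B(1)] blk_fin[OF B(1)] by (intro Max_eqI) auto
  then have "r \<in> M" using image_eqI[of r Max B \<pi>] B(1) by simp
  then obtain i where i: "1 \<le> i" "i \<le> k" "mu \<pi> i = r" using M_ex by blast
  have "mu \<pi> i \<le> mu \<pi> k" using mu_mono_le[of i k] i by auto
  moreover have "mu \<pi> k \<le> r" using mu_range[of k] k2 by auto
  ultimately show ?thesis using i by simp
qed

lemma blk_props:
  assumes "1 \<le> i" "i \<le> k"
  shows "blk \<pi> i \<in> \<pi>" "Max (blk \<pi> i) = mu \<pi> i"
proof -
  obtain B where B: "B \<in> \<pi>" "Max B = mu \<pi> i" using mu_in_M[OF assms] by (metis imageE)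
  have uniq: "B' = B" if "B' \<in> \<pi> \<and> Max B' = mu \<pi> i" for B'
    using inj_onD[OF inj_Max _ _ B(1), of B'] that B(2) by simp
  have "blk \<pi> i = B" unfolding blk_def
  proof (rule the_equality)
    show "B \<in> \<pi> \<and> Max B = mu \<pi> i" using B by simp
  qed (rule uniq)
  then show "blk \<pi> i \<in> \<pi>" "Max (blk \<pi> i) = mu \<pi> i" using B by simp_all
qed

lemma blk_surj: "B \<in> \<pi> \<Longrightarrow> \<exists>i. 1 \<le> i \<and> i \<le> k \<and> B = blk \<pi> i"
proof -
  assume B: "B \<in> \<pi>"
  then obtain i where i: "1 \<le> i" "i \<le> k" "mu \<pi> i = Max B" using M_ex by blast
  then have "blk \<pi> i = B" using blk_props[OF i(1,2)] inj_onD[OF inj_Max _ _ B, of "blk \<pi> i"] by simp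
  then show ?thesis using i by auto
qed

lemma mu_inj: "1 \<le> i \<Longrightarrow> i \<le> k \<Longrightarrow> 1 \<le> j \<Longrightarrow> j \<le> k \<Longrightarrow> i \<noteq> j \<Longrightarrow> mu \<pi> i \<noteq> mu \<pi> j"
proof -
  assume a: "1 \<le> i" "i \<le> k" "1 \<le> j" "j \<le> k" "i \<noteq> j"
  show ?thesis
  proof (cases "i < j")
    case True then show ?thesis using mu_mono[of i j] a by simp
  next
    case False then have "j < i" using a by simp
    then show ?thesis using mu_mono[of j i] a by simp
  qed
qed

lemma blk_inj: "1 \<le> i \<Longrightarrow> i \<le> k \<Longrightarrow> 1 \<le> j \<Longrightarrow> j \<le> k \<Longrightarrow> i \<noteq> j \<Longrightarrow> blk \<pi> i \<noteq> blk \<pi> j"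
proof -
  assume a: "1 \<le> i" "i \<le> k" "1 \<le> j" "j \<le> k" "i \<noteq> j"
  show ?thesis
  proof
    assume "blk \<pi> i = blk \<pi> j"
    then have "mu \<pi> i = mu \<pi> j" using blk_props(2)[of i] blk_props(2)[of j] a by simp
    then show False using mu_inj a by blast
  qed
qed

lemma blk_disj_idx: "1 \<le> i \<Longrightarrow> i \<le> k \<Longrightarrow> 1 \<le> j \<Longrightarrow> j \<le> k \<Longrightarrow> i \<noteq> j \<Longrightarrow> blk \<pi> i \<inter> blk \<pi> j = {}"
  by (rule blk_disj[OF blk_props(1) blk_props(1) blk_inj])

lemma blk1: "blk \<pi> 1 = {1}"
proof -
  have "blk \<pi> 1 \<in> \<pi>" "Max (blk \<pi> 1) = 1" using blk_props[of 1] k2 mu1 by auto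
  moreover have "Max {1::nat} = 1" by simp
  ultimately have "Max (blk \<pi> 1) = Max {1}" by simp
  then show ?thesis using inj_onD[OF inj_Max _ \<open>blk \<pi> 1 \<in> \<pi>\<close> one] by blast
qed

lemma mu_in_blk: "1 \<le> i \<Longrightarrow> i \<le> k \<Longrightarrow> mu \<pi> i \<in> blk \<pi> i"
proof -
  assume a: "1 \<le> i" "i \<le> k"
  have "Max (blk \<pi> i) \<in> blk \<pi> i" using Max_in_blk[OF blk_props(1)[OF a]] .
  then show ?thesis using blk_props(2)[OF a] by simp
qed

lemma blk_le_mu: "1 \<le> i \<Longrightarrow> i \<le> k \<Longrightarrow> blk \<pi> i \<subseteq> {..mu \<pi> i}"
proof -
  assume a: "1 \<le> i" "i \<le> k"
  show ?thesis using Max_ge[OF blk_fin[OF blk_props(1)[OF a]]] blk_props(2)[OF a] by auto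
qed

lemma Un_blk: "(\<Union>i\<in>{1..k}. blk \<pi> i) = {1..r}"
proof -
  have "(\<Union>i\<in>{1..k}. blk \<pi> i) = \<Union>\<pi>"
  proof (intro equalityI subsetI)
    fix x assume "x \<in> (\<Union>i\<in>{1..k}. blk \<pi> i)"
    then obtain i where "i \<in> {1..k}" "x \<in> blk \<pi> i" by blast
    then show "x \<in> \<Union>\<pi>" using blk_props(1)[of i] by auto
  next
    fix x assume "x \<in> \<Union>\<pi>"
    then obtain B where B: "B \<in> \<pi>" "x \<in> B" by blast
    then obtain i where "1 \<le> i" "i \<le> k" "B = blk \<pi> i" using blk_surj by blast
    then show "x \<in> (\<Union>i\<in>{1..k}. blk \<pi> i)" using B by auto
  qed
  then show ?thesis using Un_pi by simp
qed

lemma blk_sub': "1 \<le> i \<Longrightarrow> i \<le> k \<Longrightarrow> blk \<pi> i \<subseteq> {1..r}" by (rule blk_sub[OF blk_props(1)])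
lemma blk_fin': "1 \<le> i \<Longrightarrow> i \<le> k \<Longrightarrow> finite (blk \<pi> i)" by (rule blk_fin[OF blk_props(1)])
lemma blk_ne': "1 \<le> i \<Longrightarrow> i \<le> k \<Longrightarrow> blk \<pi> i \<noteq> {}" by (rule blk_ne[OF blk_props(1)])

lemma c_range: "2 \<le> i \<Longrightarrow> i < k \<Longrightarrow> 1 \<le> c i \<and> c i \<le> mu \<pi> i"
proof -
  assume "2 \<le> i" "i < k"
  then have "i \<in> {2..<k}" by simp
  then show ?thesis using cC unfolding Cset_def by blast
qed

end



context psictx
begin

definition P0 :: "(nat \<Rightarrow> 'a::field) \<Rightarrow> 'a" where
  "P0 x = (\<Prod>l\<in>{1..k}. \<Prod>j\<in>blk \<pi> l - {mu \<pi> l}. x j)"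

definition Inv :: "(nat \<Rightarrow> 'a::field) \<Rightarrow> nat \<Rightarrow> (nat \<Rightarrow> tree) \<Rightarrow> nat \<Rightarrow> bool" where
  "Inv x i \<tau> \<nu> \<longleftrightarrow>
    (\<forall>l\<in>insert 1 {i..k}. wft (\<tau> l)) \<and>
    (\<forall>l\<in>insert 1 {i..k}. \<forall>l'\<in>insert 1 {i..k}. l \<noteq> l' \<longrightarrow> verts (\<tau> l) \<inter> verts (\<tau> l') = {}) \<and>
    (\<Union>l\<in>insert 1 {i..k}. verts (\<tau> l)) = {1..r} \<and>
    (\<forall>l\<in>{i..k}. mu \<pi> l \<in> verts (\<tau> l) \<and> verts (\<tau> l) \<subseteq> {..mu \<pi> l}) \<and>
    \<nu> \<in> verts (\<tau> 1) \<and> \<nu> < mu \<pi> i \<and>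
    (\<forall>l\<in>insert 1 {i..k}. \<forall>Bb\<in>\<pi>. \<forall>a\<in>Bb. \<forall>b\<in>Bb. a < b \<and> b \<in> verts (\<tau> l) \<longrightarrow> a \<in> anc (\<tau> l) b) \<and>
    (\<Prod>l\<in>insert 1 {i..k}. W x (\<tau> l)) * x \<nu> = P0 x * x 1 * (\<Prod>m\<in>{2..<i}. x (c m))"

lemma Inv_init: "Inv x 2 (\<lambda>l. chain_tree (blk \<pi> l)) 1"
proof -
  have L: "insert 1 {2..k} = {1..k}" using k2 by auto
  have ok: "1 \<le> l \<and> l \<le> k" if "l \<in> {1..k}" for l using that by simp
  have fin: "finite (blk \<pi> l)" "blk \<pi> l \<noteq> {}" "0 \<notin> blk \<pi> l" if "l \<in> {1..k}" for l
  proof -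
    have l: "1 \<le> l" "l \<le> k" using that by simp_all
    show "finite (blk \<pi> l)" by (rule blk_fin'[OF l])
    show "blk \<pi> l \<noteq> {}" by (rule blk_ne'[OF l])
    have "blk \<pi> l \<subseteq> {1..r}" using blk_sub'[OF l] .
    then show "0 \<notin> blk \<pi> l" by auto
  qed
  have A: "\<forall>l\<in>{1..k}. wft (chain_tree (blk \<pi> l))"
  proof
    fix l assume l: "l \<in> {1..k}"
    show "wft (chain_tree (blk \<pi> l))" by (rule chain_tree_wft[OF fin[OF l]])
  qed
  have B: "\<forall>l\<in>{1..k}. \<forall>l'\<in>{1..k}. l \<noteq> l' \<longrightarrow> verts (chain_tree (blk \<pi> l)) \<inter> verts (chain_tree (blk \<pi> l')) = {}"
  proof (intro ballI impI)
    fix l l' assume "l \<in> {1..k}" "l' \<in> {1..k}" "l \<noteq> l'"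
    then show "verts (chain_tree (blk \<pi> l)) \<inter> verts (chain_tree (blk \<pi> l')) = {}"
      unfolding chain_tree_verts using blk_disj_idx[of l l'] by simp
  qed
  have C: "(\<Union>l\<in>{1..k}. verts (chain_tree (blk \<pi> l))) = {1..r}"
    using Un_blk unfolding chain_tree_verts by simp
  have D: "\<forall>l\<in>{2..k}. mu \<pi> l \<in> verts (chain_tree (blk \<pi> l)) \<and> verts (chain_tree (blk \<pi> l)) \<subseteq> {..mu \<pi> l}"
  proof
    fix l assume "l \<in> {2..k}"
    then have l: "1 \<le> l" "l \<le> k" by simp_all
    show "mu \<pi> l \<in> verts (chain_tree (blk \<pi> l)) \<and> verts (chain_tree (blk \<pi> l)) \<subseteq> {..mu \<pi> l}"
      unfolding chain_tree_verts using mu_in_blk[OF l] blk_le_mu[OF l] by simp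
  qed
  have E: "1 \<in> verts (chain_tree (blk \<pi> 1))" using blk1 chain_tree_verts by simp
  have F: "1 < mu \<pi> 2" using mu_mono[of 1 2] k2 mu1 by simp
  have G: "\<forall>l\<in>{1..k}. \<forall>Bb\<in>\<pi>. \<forall>a\<in>Bb. \<forall>b\<in>Bb. a < b \<and> b \<in> verts (chain_tree (blk \<pi> l)) \<longrightarrow> a \<in> anc (chain_tree (blk \<pi> l)) b"
  proof (intro ballI impI)
    fix l Bb a b assume l: "l \<in> {1..k}" and Bb: "Bb \<in> \<pi>" and a: "a \<in> Bb" and b: "b \<in> Bb"
      and ab: "a < b \<and> b \<in> verts (chain_tree (blk \<pi> l))"
    have bl: "b \<in> blk \<pi> l" using ab chain_tree_verts by simp
    have "Bb = blk \<pi> l"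
    proof (rule ccontr)
      assume "Bb \<noteq> blk \<pi> l"
      then have "Bb \<inter> blk \<pi> l = {}" using blk_disj[OF Bb blk_props(1)] l by simp
      then show False using b bl by blast
    qed
    then show "a \<in> anc (chain_tree (blk \<pi> l)) b"
      using chain_tree_anc[OF fin(1)[OF l]] a b ab by simp
  qed
  have H: "(\<Prod>l\<in>{1..k}. W x (chain_tree (blk \<pi> l))) = P0 x"
    unfolding P0_def
  proof (rule prod.cong)
    fix l assume l: "l \<in> {1..k}"
    show "W x (chain_tree (blk \<pi> l)) = (\<Prod>j\<in>blk \<pi> l - {mu \<pi> l}. x j)"
      using chain_tree_W[OF fin[OF l]] blk_props(2)[of l] l by simp
  qed simp
  show ?thesis unfolding Inv_def L using A B C D E F G H by simp
qed

lemma InvD: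
  assumes "Inv x i \<tau> \<nu>"
  shows "\<And>l. l \<in> insert 1 {i..k} \<Longrightarrow> wft (\<tau> l)"
    "\<And>l l'. l \<in> insert 1 {i..k} \<Longrightarrow> l' \<in> insert 1 {i..k} \<Longrightarrow> l \<noteq> l' \<Longrightarrow> verts (\<tau> l) \<inter> verts (\<tau> l') = {}"
    "(\<Union>l\<in>insert 1 {i..k}. verts (\<tau> l)) = {1..r}"
    "\<And>l. l \<in> {i..k} \<Longrightarrow> mu \<pi> l \<in> verts (\<tau> l)"
    "\<And>l. l \<in> {i..k} \<Longrightarrow> verts (\<tau> l) \<subseteq> {..mu \<pi> l}"
    "\<nu> \<in> verts (\<tau> 1)" "\<nu> < mu \<pi> i"
    "\<And>l Bb a b. l \<in> insert 1 {i..k} \<Longrightarrow> Bb \<in> \<pi> \<Longrightarrow> a \<in> Bb \<Longrightarrow> b \<in> Bb \<Longrightarrow> a < b \<Longrightarrow> b \<in> verts (\<tau> l) \<Longrightarrow> a \<in> anc (\<tau> l) b"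
    "(\<Prod>l\<in>insert 1 {i..k}. W x (\<tau> l)) * x \<nu> = P0 x * x 1 * (\<Prod>m\<in>{2..<i}. x (c m))"
proof -
  note c = assms[unfolded Inv_def]
  note c1 = conjunct1[OF c] and d1 = conjunct2[OF c]
  note c2 = conjunct1[OF d1] and d2 = conjunct2[OF d1]
  note c3 = conjunct1[OF d2] and d3 = conjunct2[OF d2]
  note c4 = conjunct1[OF d3] and d4 = conjunct2[OF d3]
  note c5 = conjunct1[OF d4] and d5 = conjunct2[OF d4]
  note c6 = conjunct1[OF d5] and d6 = conjunct2[OF d5]
  note c7 = conjunct1[OF d6] and c8 = conjunct2[OF d6]
  show "\<And>l. l \<in> insert 1 {i..k} \<Longrightarrow> wft (\<tau> l)" using c1 by blast
  show "\<And>l l'. l \<in> insert 1 {i..k} \<Longrightarrow> l' \<in> insert 1 {i..k} \<Longrightarrow> l \<noteq> l' \<Longrightarrow> verts (\<tau> l) \<inter> verts (\<tau> l') = {}"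
    using c2 by blast
  show "(\<Union>l\<in>insert 1 {i..k}. verts (\<tau> l)) = {1..r}" by (rule c3)
  show "\<And>l. l \<in> {i..k} \<Longrightarrow> mu \<pi> l \<in> verts (\<tau> l)" using c4 by blast
  show "\<And>l. l \<in> {i..k} \<Longrightarrow> verts (\<tau> l) \<subseteq> {..mu \<pi> l}" using c4 by blast
  show "\<nu> \<in> verts (\<tau> 1)" by (rule c5)
  show "\<nu> < mu \<pi> i" by (rule c6)
  show "\<And>l Bb a b. l \<in> insert 1 {i..k} \<Longrightarrow> Bb \<in> \<pi> \<Longrightarrow> a \<in> Bb \<Longrightarrow> b \<in> Bb \<Longrightarrow> a < b \<Longrightarrow> b \<in> verts (\<tau> l) \<Longrightarrow> a \<in> anc (\<tau> l) b"
    using c7 by blast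
  show "(\<Prod>l\<in>insert 1 {i..k}. W x (\<tau> l)) * x \<nu> = P0 x * x 1 * (\<Prod>m\<in>{2..<i}. x (c m))" by (rule c8)
qed

lemma merge:
  assumes I: "Inv x i \<tau> \<nu>" and i: "2 \<le> i" "i < k" and t: "t \<in> insert 1 {Suc i..k}"
    and v: "v \<in> verts (\<tau> t)" "v < mu \<pi> i"
    and S: "S = spl (\<tau> i) (mu \<pi> i) (\<tau> t) v" and tau': "\<tau>' = \<tau>(t := S)"
  shows "\<forall>l\<in>insert 1 {Suc i..k}. wft (\<tau>' l)"
    "\<forall>l\<in>insert 1 {Suc i..k}. \<forall>l'\<in>insert 1 {Suc i..k}. l \<noteq> l' \<longrightarrow> verts (\<tau>' l) \<inter> verts (\<tau>' l') = {}"
    "(\<Union>l\<in>insert 1 {Suc i..k}. verts (\<tau>' l)) = {1..r}"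
    "\<forall>l\<in>{Suc i..k}. mu \<pi> l \<in> verts (\<tau>' l) \<and> verts (\<tau>' l) \<subseteq> {..mu \<pi> l}"
    "\<forall>l\<in>insert 1 {Suc i..k}. \<forall>Bb\<in>\<pi>. \<forall>a\<in>Bb. \<forall>b\<in>Bb. a < b \<and> b \<in> verts (\<tau>' l) \<longrightarrow> a \<in> anc (\<tau>' l) b"
    "(\<Prod>l\<in>insert 1 {Suc i..k}. W x (\<tau>' l)) = (\<Prod>l\<in>insert 1 {i..k}. W x (\<tau> l)) * x v"
    "verts (\<tau>' t) = verts (\<tau> i) \<union> verts (\<tau> t)"
    "\<And>l. l \<noteq> t \<Longrightarrow> \<tau>' l = \<tau> l"
proof -
  define L where "L = insert 1 {i..k}"
  define L' where "L' = insert 1 {Suc i..k}"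
  have iL: "i \<in> L" unfolding L_def using i by simp
  have iL': "i \<notin> L'" unfolding L'_def using i by simp
  have LL: "L = insert i L'" unfolding L_def L'_def using i by auto
  have tL: "t \<in> L" using t unfolding L_def by auto
  have ti: "t \<noteq> i" using t i by auto
  have finL': "finite L'" unfolding L'_def by simp
  have L'L: "\<And>l. l \<in> L' \<Longrightarrow> l \<in> L" unfolding LL by simp
  have wi: "wft (\<tau> i)" using InvD(1)[OF I] iL unfolding L_def by blast
  have wt: "wft (\<tau> t)" using InvD(1)[OF I] tL unfolding L_def by blast
  have dit: "verts (\<tau> i) \<inter> verts (\<tau> t) = {}" using InvD(2)[OF I] iL tL ti unfolding L_def by blast
  have mui: "mu \<pi> i \<in> verts (\<tau> i)" using InvD(4)[OF I, of i] i by simp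
  interpret sp: splice "\<tau> i" "\<tau> t" "mu \<pi> i" v
    by unfold_locales (use wi wt dit mui v in auto)
  have TS: "sp.TT = S" using S by simp
  have other: "\<And>l. l \<noteq> t \<Longrightarrow> \<tau>' l = \<tau> l" using tau' by simp
  have tt: "\<tau>' t = S" using tau' by simp
  have VS: "verts S = verts (\<tau> i) \<union> verts (\<tau> t)" using sp.TV TS by simp
  show "\<And>l. l \<noteq> t \<Longrightarrow> \<tau>' l = \<tau> l" by (rule other)
  show "verts (\<tau>' t) = verts (\<tau> i) \<union> verts (\<tau> t)" using tt VS by simp
  show "\<forall>l\<in>insert 1 {Suc i..k}. wft (\<tau>' l)"
  proof
    fix l assume "l \<in> insert 1 {Suc i..k}"
    then have l: "l \<in> L'" unfolding L'_def .
    show "wft (\<tau>' l)"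
    proof (cases "l = t")
      case True then show ?thesis using tt TS sp.wftT by simp
    next
      case False then show ?thesis using other InvD(1)[OF I] L'L[OF l] unfolding L_def by simp
    qed
  qed
  show "\<forall>l\<in>insert 1 {Suc i..k}. \<forall>l'\<in>insert 1 {Suc i..k}. l \<noteq> l' \<longrightarrow> verts (\<tau>' l) \<inter> verts (\<tau>' l') = {}"
  proof (intro ballI impI)
    fix l l' assume "l \<in> insert 1 {Suc i..k}" "l' \<in> insert 1 {Suc i..k}" and ll: "l \<noteq> l'"
    then have l: "l \<in> L'" and l': "l' \<in> L'" unfolding L'_def by auto
    have d: "verts (\<tau> a) \<inter> verts (\<tau> b) = {}" if "a \<in> L" "b \<in> L" "a \<noteq> b" for a b
      using InvD(2)[OF I] that unfolding L_def by blast
    have li: "l \<noteq> i" "l' \<noteq> i" using l l' iL' by auto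
    show "verts (\<tau>' l) \<inter> verts (\<tau>' l') = {}"
    proof (cases "l = t")
      case True
      then have "l' \<noteq> t" using ll by simp
      then show ?thesis using True tt VS other d[OF iL L'L[OF l'] li(2)[symmetric]] d[OF tL L'L[OF l']] by auto
    next
      case False
      show ?thesis
      proof (cases "l' = t")
        case True
        then show ?thesis using False tt VS other d[OF L'L[OF l] iL li(1)] d[OF L'L[OF l] tL] by auto
      next
        case F2: False
        then show ?thesis using False other d[OF L'L[OF l] L'L[OF l'] ll] by simp
      qed
    qed
  qed
  show "(\<Union>l\<in>insert 1 {Suc i..k}. verts (\<tau>' l)) = {1..r}"
  proof -
    have "(\<Union>l\<in>L'. verts (\<tau>' l)) = (\<Union>l\<in>L. verts (\<tau> l))"
    proof (intro equalityI subsetI)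
      fix y assume "y \<in> (\<Union>l\<in>L'. verts (\<tau>' l))"
      then obtain l where l: "l \<in> L'" "y \<in> verts (\<tau>' l)" by blast
      show "y \<in> (\<Union>l\<in>L. verts (\<tau> l))"
      proof (cases "l = t")
        case True then have "y \<in> verts (\<tau> i) \<or> y \<in> verts (\<tau> t)" using l tt VS by simp
        then show ?thesis using iL tL by blast
      next
        case False then show ?thesis using l other L'L by auto
      qed
    next
      fix y assume "y \<in> (\<Union>l\<in>L. verts (\<tau> l))"
      then obtain l where l: "l \<in> L" "y \<in> verts (\<tau> l)" by blast
      have tL': "t \<in> L'" using t unfolding L'_def .
      show "y \<in> (\<Union>l\<in>L'. verts (\<tau>' l))"
      proof (cases "l = i \<or> l = t")
        case True then have "y \<in> verts (\<tau>' t)" using l tt VS by auto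
        then show ?thesis using tL' by blast
      next
        case False then have lL': "l \<in> L'" and "\<tau>' l = \<tau> l" using l LL other by auto
        then have "y \<in> verts (\<tau>' l)" using l by simp
        then show ?thesis using lL' by blast
      qed
    qed
    then show ?thesis using InvD(3)[OF I] unfolding L_def L'_def by simp
  qed
  show "\<forall>l\<in>{Suc i..k}. mu \<pi> l \<in> verts (\<tau>' l) \<and> verts (\<tau>' l) \<subseteq> {..mu \<pi> l}"
  proof
    fix l assume l: "l \<in> {Suc i..k}"
    then have l2: "l \<in> {i..k}" by simp
    show "mu \<pi> l \<in> verts (\<tau>' l) \<and> verts (\<tau>' l) \<subseteq> {..mu \<pi> l}"
    proof (cases "l = t")
      case True
      have lt: "mu \<pi> i < mu \<pi> l" using mu_mono[of i l] i l by simp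
      have "verts (\<tau> i) \<subseteq> {..mu \<pi> i}" using InvD(5)[OF I, of i] i by simp
      moreover have "verts (\<tau> l) \<subseteq> {..mu \<pi> l}" using InvD(5)[OF I l2] .
      moreover have "mu \<pi> l \<in> verts (\<tau> l)" using InvD(4)[OF I l2] .
      ultimately show ?thesis using True tt VS lt by auto
    next
      case False then show ?thesis using other InvD(4,5)[OF I l2] by simp
    qed
  qed
  show "\<forall>l\<in>insert 1 {Suc i..k}. \<forall>Bb\<in>\<pi>. \<forall>a\<in>Bb. \<forall>b\<in>Bb. a < b \<and> b \<in> verts (\<tau>' l) \<longrightarrow> a \<in> anc (\<tau>' l) b"
  proof (intro ballI impI)
    fix l Bb a b assume l0: "l \<in> insert 1 {Suc i..k}" and Bb: "Bb \<in> \<pi>" and a: "a \<in> Bb" and b: "b \<in> Bb"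
      and ab: "a < b \<and> b \<in> verts (\<tau>' l)"
    have l: "l \<in> L'" using l0 unfolding L'_def .
    have anc0: "a \<in> anc (\<tau> m) b" if "m \<in> L" "b \<in> verts (\<tau> m)" for m
      using InvD(8)[OF I _ Bb a b] that ab unfolding L_def by blast
    show "a \<in> anc (\<tau>' l) b"
    proof (cases "l = t")
      case True
      then have "b \<in> verts (\<tau> i) \<or> b \<in> verts (\<tau> t)" using ab tt VS by simp
      then have "a \<in> anc sp.TT b"
      proof
        assume "b \<in> verts (\<tau> i)" then show ?thesis using sp.anc1 anc0[OF iL] by blast
      next
        assume "b \<in> verts (\<tau> t)" then show ?thesis using sp.anc2 anc0[OF tL] by blast
      qed
      then show ?thesis using True tt TS by simp
    next
      case False then show ?thesis using other ab anc0[OF L'L[OF l]] by simp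
    qed
  qed
  show "(\<Prod>l\<in>insert 1 {Suc i..k}. W x (\<tau>' l)) = (\<Prod>l\<in>insert 1 {i..k}. W x (\<tau> l)) * x v"
  proof -
    have tL': "t \<in> L'" using t unfolding L'_def .
    have "(\<Prod>l\<in>L'. W x (\<tau>' l)) = W x (\<tau>' t) * (\<Prod>l\<in>L' - {t}. W x (\<tau>' l))"
      using prod.remove[OF finL' tL'] .
    also have "(\<Prod>l\<in>L' - {t}. W x (\<tau>' l)) = (\<Prod>l\<in>L' - {t}. W x (\<tau> l))"
      using other by (intro prod.cong) auto
    also have "W x (\<tau>' t) = W x (\<tau> i) * W x (\<tau> t) * x v" using tt TS sp.WT by simp
    finally have e1: "(\<Prod>l\<in>L'. W x (\<tau>' l)) = W x (\<tau> i) * W x (\<tau> t) * x v * (\<Prod>l\<in>L' - {t}. W x (\<tau> l))" .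
    have "(\<Prod>l\<in>L. W x (\<tau> l)) = W x (\<tau> i) * (\<Prod>l\<in>L'. W x (\<tau> l))"
      unfolding LL using finL' iL' by simp
    also have "(\<Prod>l\<in>L'. W x (\<tau> l)) = W x (\<tau> t) * (\<Prod>l\<in>L' - {t}. W x (\<tau> l))"
      using prod.remove[OF finL' tL'] .
    finally have e2: "(\<Prod>l\<in>L. W x (\<tau> l)) = W x (\<tau> i) * (W x (\<tau> t) * (\<Prod>l\<in>L' - {t}. W x (\<tau> l)))" .
    show ?thesis using e1 e2 unfolding L_def[symmetric] L'_def[symmetric] by (simp add: mult_ac)
  qed
qed

end



context psictx
begin

lemma Inv_step:
  assumes I: "Inv x i \<tau> \<nu>" and i: "2 \<le> i" "i < k"
  shows "Inv x (Suc i) (fst (psi_stage \<pi> c i (\<tau>, \<nu>))) (snd (psi_stage \<pi> c i (\<tau>, \<nu>)))"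
proof -
  have ci: "1 \<le> c i" "c i \<le> mu \<pi> i" using c_range[OF i] by auto
  have muS: "mu \<pi> i < mu \<pi> (Suc i)" using mu_mono[of i "Suc i"] i by simp
  have prodS: "(\<Prod>m\<in>{2..<Suc i}. x (c m)) = (\<Prod>m\<in>{2..<i}. x (c m)) * x (c i)"
    using i by simp
  have w: "(\<Prod>l\<in>insert 1 {i..k}. W x (\<tau> l)) * x \<nu> = P0 x * x 1 * (\<Prod>m\<in>{2..<i}. x (c m))"
    by (rule InvD(9)[OF I])
  show ?thesis
  proof (cases "c i \<in> verts (\<tau> 1) \<or> c i \<in> verts (\<tau> i)")
    case True
    define S where "S = spl (\<tau> i) (mu \<pi> i) (\<tau> 1) \<nu>"
    define \<tau>' where "\<tau>' = \<tau>(1 := S)"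
    have ps: "psi_stage \<pi> c i (\<tau>, \<nu>) = (\<tau>', c i)"
      using True unfolding psi_stage_def \<tau>'_def S_def by simp
    have t: "1 \<in> insert 1 {Suc i..k}" by simp
    note m = merge[OF I i(1) i(2) t InvD(6)[OF I] InvD(7)[OF I] S_def \<tau>'_def]
    have cv: "c i \<in> verts (\<tau>' 1)" using m(7) True by auto
    have cl: "c i < mu \<pi> (Suc i)" using ci muS by simp
    have ww: "(\<Prod>l\<in>insert 1 {Suc i..k}. W x (\<tau>' l)) * x (c i) = P0 x * x 1 * (\<Prod>m\<in>{2..<Suc i}. x (c m))"
      unfolding m(6) prodS using w by (simp add: mult_ac)
    show ?thesis unfolding ps fst_conv snd_conv Inv_def
      using m(1) m(2) m(3) m(4) m(5) cv cl ww by blast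
  next
    case False
    define j where "j = (THE j. i < j \<and> j \<le> k \<and> c i \<in> verts (\<tau> j))"
    define S where "S = spl (\<tau> i) (mu \<pi> i) (\<tau> j) (c i)"
    define \<tau>' where "\<tau>' = \<tau>(j := S)"
    have ps: "psi_stage \<pi> c i (\<tau>, \<nu>) = (\<tau>', \<nu>)"
      using False unfolding psi_stage_def \<tau>'_def S_def j_def Let_def by simp
    have cr: "c i \<in> {1..r}" using ci mu_range[of i] i by auto
    then have "c i \<in> (\<Union>l\<in>insert 1 {i..k}. verts (\<tau> l))" using InvD(3)[OF I] by simp
    then obtain l where l: "l \<in> insert 1 {i..k}" "c i \<in> verts (\<tau> l)" by blast
    have l1: "l \<noteq> 1" "l \<noteq> i" using l False by auto
    then have lr: "i < l" "l \<le> k" using l by auto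
    have jl: "j = l" unfolding j_def
    proof (rule the_equality)
      show "i < l \<and> l \<le> k \<and> c i \<in> verts (\<tau> l)" using lr l by simp
    next
      fix j' assume j': "i < j' \<and> j' \<le> k \<and> c i \<in> verts (\<tau> j')"
      show "j' = l"
      proof (rule ccontr)
        assume "j' \<noteq> l"
        then have "verts (\<tau> j') \<inter> verts (\<tau> l) = {}" using InvD(2)[OF I, of j' l] j' l by simp
        then show False using j' l by blast
      qed
    qed
    have t: "j \<in> insert 1 {Suc i..k}" using jl lr by simp
    have cj: "c i \<in> verts (\<tau> j)" using jl l by simp
    have cneq: "c i \<noteq> mu \<pi> i" using InvD(4)[OF I, of i] i False by auto
    have clt: "c i < mu \<pi> i" using ci cneq by simp
    note m = merge[OF I i(1) i(2) t cj clt S_def \<tau>'_def]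
    have j1: "j \<noteq> 1" using jl l1 by simp
    have nv: "\<nu> \<in> verts (\<tau>' 1)" using m(8)[of 1] j1 InvD(6)[OF I] by simp
    have nl: "\<nu> < mu \<pi> (Suc i)" using InvD(7)[OF I] muS by simp
    have ww: "(\<Prod>l\<in>insert 1 {Suc i..k}. W x (\<tau>' l)) * x \<nu> = P0 x * x 1 * (\<Prod>m\<in>{2..<Suc i}. x (c m))"
      unfolding m(6) prodS using w by (simp add: mult_ac)
    show ?thesis unfolding ps fst_conv snd_conv Inv_def
      using m(1) m(2) m(3) m(4) m(5) nv nl ww by blast
  qed
qed

lemma Inv_fold:
  assumes "2 \<le> i" "i \<le> k"
  shows "Inv x i (fst (fold (psi_stage \<pi> c) [2..<i] (psi_init \<pi>))) (snd (fold (psi_stage \<pi> c) [2..<i] (psi_init \<pi>)))"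
  using assms
proof (induction i rule: nat_induct_at_least)
  case base
  show ?case using Inv_init unfolding psi_init_def by simp
next
  case (Suc n)
  define st where "st = fold (psi_stage \<pi> c) [2..<n] (psi_init \<pi>)"
  have IH: "Inv x n (fst st) (snd st)" using Suc st_def by simp
  have "fold (psi_stage \<pi> c) [2..<Suc n] (psi_init \<pi>) = psi_stage \<pi> c n st"
    using Suc(1) unfolding st_def by simp
  moreover have "st = (fst st, snd st)" by simp
  ultimately show ?case using Inv_step[OF IH Suc(1)] Suc(3) by (metis Suc_le_lessD)
qed

lemma final:
  fixes x :: "nat \<Rightarrow> 'a::field"
  shows "inE r \<pi> (psi \<pi> c) \<and> ((\<forall>i\<in>{1..r}. x i \<noteq> 0) \<longrightarrow> kappa x (psi \<pi> c) = omega x r \<pi> c)"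
proof -
  define st where "st = fold (psi_stage \<pi> c) [2..<k] (psi_init \<pi>)"
  define \<tau> where "\<tau> = fst st"
  define \<nu> where "\<nu> = snd st"
  have I: "Inv x k \<tau> \<nu>" using Inv_fold[of k x] k2 unfolding \<tau>_def \<nu>_def st_def by simp
  have psi: "psi \<pi> c = spl (\<tau> k) (mu \<pi> k) (\<tau> 1) \<nu>"
    unfolding psi_def Let_def st_def[symmetric] \<tau>_def \<nu>_def by simp
  have L: "insert 1 {k..k} = {1, k}" by auto
  have k1: "k \<noteq> 1" using k2 by simp
  have wk: "wft (\<tau> k)" and w1: "wft (\<tau> 1)" using InvD(1)[OF I] by auto
  have dk: "verts (\<tau> k) \<inter> verts (\<tau> 1) = {}" using InvD(2)[OF I, of k 1] k1 by simp
  have muk_in: "mu \<pi> k \<in> verts (\<tau> k)" using InvD(4)[OF I, of k] by simp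
  interpret sp: splice "\<tau> k" "\<tau> 1" "mu \<pi> k" \<nu>
    by unfold_locales (use wk w1 dk muk_in InvD(6)[OF I] InvD(7)[OF I] in auto)
  have T: "psi \<pi> c = sp.TT" using psi by simp
  have VT: "verts sp.TT = {1..r}"
    using sp.TV InvD(3)[OF I] unfolding L by auto
  have anc: "\<forall>B\<in>\<pi>. \<forall>a\<in>B. \<forall>b\<in>B. a < b \<longrightarrow> a \<in> anc sp.TT b"
  proof (intro ballI impI)
    fix B a b assume B: "B \<in> \<pi>" and a: "a \<in> B" and b: "b \<in> B" and ab: "a < b"
    have "b \<in> {1..r}" using b blk_sub[OF B] by auto
    then have "b \<in> verts (\<tau> k) \<or> b \<in> verts (\<tau> 1)" using VT sp.TV by auto
    then show "a \<in> anc sp.TT b"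
    proof
      assume bk: "b \<in> verts (\<tau> k)"
      have "a \<in> anc (\<tau> k) b" using InvD(8)[OF I _ B a b ab bk] by simp
      then show ?thesis using sp.anc1[OF bk] by blast
    next
      assume b1: "b \<in> verts (\<tau> 1)"
      have "a \<in> anc (\<tau> 1) b" using InvD(8)[OF I _ B a b ab b1] by simp
      then show ?thesis using sp.anc2[OF b1] by blast
    qed
  qed
  have inc: "is_inc_tree sp.TT" using sp.wftT unfolding wft_def by simp
  have inE: "inE r \<pi> (psi \<pi> c)" unfolding inE_def T using inc VT anc by simp
  have WTT: "W x sp.TT = P0 x * x 1 * (\<Prod>m\<in>{2..<k}. x (c m))"
  proof -
    have "W x sp.TT = W x (\<tau> k) * W x (\<tau> 1) * x \<nu>" by (rule sp.WT)
    also have "\<dots> = (\<Prod>l\<in>insert 1 {k..k}. W x (\<tau> l)) * x \<nu>" unfolding L using k1 by (simp add: mult_ac)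
    also have "\<dots> = P0 x * x 1 * (\<Prod>m\<in>{2..<k}. x (c m))" by (rule InvD(9)[OF I])
    finally show ?thesis .
  qed
  have P0eq: "P0 x * (\<Prod>l\<in>{1..k}. x (mu \<pi> l)) = (\<Prod>j\<in>{1..r}. x j)"
  proof -
    have "(\<Prod>j\<in>{1..r}. x j) = (\<Prod>j\<in>(\<Union>l\<in>{1..k}. blk \<pi> l). x j)" using Un_blk by simp
    also have "\<dots> = (\<Prod>l\<in>{1..k}. \<Prod>j\<in>blk \<pi> l. x j)"
    proof (rule prod.UNION_disjoint)
      show "finite {1..k}" by simp
      show "\<forall>l\<in>{1..k}. finite (blk \<pi> l)" using blk_fin' by simp
      show "\<forall>l\<in>{1..k}. \<forall>l'\<in>{1..k}. l \<noteq> l' \<longrightarrow> blk \<pi> l \<inter> blk \<pi> l' = {}" using blk_disj_idx by simp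
    qed
    also have "\<dots> = (\<Prod>l\<in>{1..k}. x (mu \<pi> l) * (\<Prod>j\<in>blk \<pi> l - {mu \<pi> l}. x j))"
    proof (rule prod.cong)
      fix l assume "l \<in> {1..k}"
      then have l: "1 \<le> l" "l \<le> k" by simp_all
      show "(\<Prod>j\<in>blk \<pi> l. x j) = x (mu \<pi> l) * (\<Prod>j\<in>blk \<pi> l - {mu \<pi> l}. x j)"
        using prod.remove[OF blk_fin'[OF l] mu_in_blk[OF l]] .
    qed simp
    also have "\<dots> = (\<Prod>l\<in>{1..k}. x (mu \<pi> l)) * P0 x" unfolding P0_def prod.distrib ..
    finally show ?thesis by (simp add: mult_ac)
  qed
  have split: "(\<Prod>l\<in>{1..k}. x (mu \<pi> l)) = x 1 * (\<Prod>l\<in>{2..k}. x (mu \<pi> l))"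
  proof -
    have "{1..k} = insert 1 {2..k}" using k2 by auto
    then show ?thesis using mu1 by simp
  qed
  show ?thesis
  proof (intro conjI impI)
    show "inE r \<pi> (psi \<pi> c)" by (rule inE)
    assume nz: "\<forall>i\<in>{1..r}. x i \<noteq> 0"
    have D: "(\<Prod>l\<in>{2..k}. x (mu \<pi> l)) \<noteq> 0"
    proof -
      have "x (mu \<pi> l) \<noteq> 0" if "l \<in> {2..k}" for l
      proof -
        have "mu \<pi> l \<in> {1..r}" using mu_range[of l] that by simp
        then show ?thesis using nz by blast
      qed
      then show ?thesis by (simp add: prod_zero_iff)
    qed
    have "kappa x (psi \<pi> c) = W x sp.TT" using kappa_W[OF inc] T by simp
    also have "\<dots> = P0 x * x 1 * (\<Prod>m\<in>{2..<k}. x (c m))" by (rule WTT)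
    also have "\<dots> = omega x r \<pi> c"
      unfolding omega_def using D P0eq[unfolded split]
      by (simp add: field_simps)
    finally show "kappa x (psi \<pi> c) = omega x r \<pi> c" .
  qed
qed

end

theorem proposition2p7:
  fixes r :: nat and \<pi> :: "nat set set" and c :: "nat \<Rightarrow> nat"
  assumes "r \<ge> 2" and "\<pi> \<in> Pi1 r" and "c \<in> Cset \<pi>"
  shows "inE r \<pi> (psi \<pi> c) \<and>
    (\<forall>x :: nat \<Rightarrow> 'a::field. (\<forall>i\<in>{1..r}. x i \<noteq> 0) \<longrightarrow>
       kappa x (psi \<pi> c) = omega x r \<pi> c)"
proof -
  interpret psictx r \<pi> c using assms by unfold_locales
  show ?thesis using final by blast
qed


end
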